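(* Let $P$ be a finite poset. For every $f\in(\mathbb R^+)^P$, $$\rho_{\mathcal B}(f)=\alpha_1\bigl(\alpha_3(\alpha_2(f))\bigr),$$ where the birational maps $\alpha_1,\alpha_2,\alpha_3:(\mathbb R^+)^P\to(\mathbb R^+)^P$ are defined below.
   Context: For a finite poset $P$, let $\widehat P=P\cup\{\hat0,\hat1\}$ with $\hat0<x<\hat1$ for all $x\in P$; write $y\lessdot x$ ($x$ covers $y$) when $y<x$ and no $z$ satisfies $y<z<x$; for $x\in P$ let $x^+=\{y\in\widehat P: y\gtrdot x\}$ and $x^-=\{y\in\widehat P:y\lessdot x\}$. Each $f:P\to\mathbb R^+$ (positive reals) is extended to $\hat f$ on $\widehat P$ by $\hat f(\hat0)=\hat f(\hat1)=1$. The parallel sum of positive reals $s_1,\dots,s_m$ is $s_1\parallel\cdots\parallel s_m=(1/s_1+\cdots+1/s_m)^{-1}$. For $x\in P$ the birational toggle $\tau_x:(\mathbb R^+)^P\to(\mathbb R^+)^P$ leaves $f(y)$ unchanged for $y\neq x$ and sets $(\tau_xf)(x)=\frac{1}{f(x)}\Bigl(\sum_{y\in x^-}\hat f(y)\Bigr)\Bigl(\,\big\|_{y\in x^+}\hat f(y)\Bigr)$. Birational rowmotion is $\rho_{\mathcal B}=\tau_{x_1}\circ\cdots\circ\tau_{x_p}$ for any linear extension $x_1,\dots,x_p$ of $P$ (top elements toggled first; independent of the choice). Define $(\alpha_1 f)(x)=1/f(x)$; $(\alpha_2f)(x)=\big\|_{y\in x^-}\,\bigl(f(x)/\hat f(y)\bigr)$;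 and $\alpha_3 f$ recursively from the top by $(\alpha_3f)(\hat1)=1$ and $(\alpha_3f)(x)=f(x)\sum_{y\in x^+}(\alpha_3f)(y)$ for $x\in P$. *)

theory Defs
  imports Main "HOL.Real"
begin

datatype 'a hat = Bot | Top | Elem 'a

definition partial_order_on' :: "'a set \<Rightarrow> ('a \<Rightarrow> 'a \<Rightarrow> bool) \<Rightarrow> bool" where
  "partial_order_on' P le \<longleftrightarrow>
     (\<forall>x\<in>P. le x x) \<and>
     (\<forall>x\<in>P. \<forall>y\<in>P. le x y \<and> le y x \<longrightarrow> x = y) \<and>
     (\<forall>x\<in>P. \<forall>y\<in>P. \<forall>z\<in>P. le x y \<and> le y z \<longrightarrow> le x z)"

definition hatset :: "'a set \<Rightarrow> 'a hat set" where
  "hatset P = {Bot, Top} \<union> Elem ` P"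

fun hle :: "('a \<Rightarrow> 'a \<Rightarrow> bool) \<Rightarrow> 'a hat \<Rightarrow> 'a hat \<Rightarrow> bool" where
  "hle le Bot _ = True"
| "hle le _ Top = True"
| "hle le (Elem x) (Elem y) = le x y"
| "hle le _ _ = False"

definition hless :: "('a \<Rightarrow> 'a \<Rightarrow> bool) \<Rightarrow> 'a hat \<Rightarrow> 'a hat \<Rightarrow> bool" where
  "hless le a b \<longleftrightarrow> hle le a b \<and> a \<noteq> b"

definition covers :: "'a set \<Rightarrow> ('a \<Rightarrow> 'a \<Rightarrow> bool) \<Rightarrow> 'a hat \<Rightarrow> 'a hat \<Rightarrow> bool" where
  "covers P le a b \<longleftrightarrow> a \<in> hatset P \<and> b \<in> hatset P \<and> hless le a b \<and>
     \<not> (\<exists>z\<in>hatset P. hless le a z \<and> hless le z b)"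

definition upc :: "'a set \<Rightarrow> ('a \<Rightarrow> 'a \<Rightarrow> bool) \<Rightarrow> 'a \<Rightarrow> 'a hat set" where
  "upc P le x = {y \<in> hatset P. covers P le (Elem x) y}"

definition downc :: "'a set \<Rightarrow> ('a \<Rightarrow> 'a \<Rightarrow> bool) \<Rightarrow> 'a \<Rightarrow> 'a hat set" where
  "downc P le x = {y \<in> hatset P. covers P le y (Elem x)}"

fun fhat :: "('a \<Rightarrow> real) \<Rightarrow> 'a hat \<Rightarrow> real" where
  "fhat f Bot = 1"
| "fhat f Top = 1"
| "fhat f (Elem x) = f x"

definition psum :: "'b set \<Rightarrow> ('b \<Rightarrow> real) \<Rightarrow> real" where
  "psum S g = 1 / (\<Sum>y\<in>S. 1 / g y)"

definition toggle :: "'a set \<Rightarrow> ('a \<Rightarrow> 'a \<Rightarrow> bool) \<Rightarrow> 'a \<Rightarrow> ('a \<Rightarrow> real) \<Rightarrow> ('a \<Rightarrow> real)" where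
  "toggle P le x f = f(x := (1 / f x) * (\<Sum>y\<in>downc P le x. fhat f y) * psum (upc P le x) (fhat f))"

definition linear_extension :: "'a set \<Rightarrow> ('a \<Rightarrow> 'a \<Rightarrow> bool) \<Rightarrow> 'a list \<Rightarrow> bool" where
  "linear_extension P le xs \<longleftrightarrow> distinct xs \<and> set xs = P \<and>
     (\<forall>i<length xs. \<forall>j<length xs. le (xs ! i) (xs ! j) \<longrightarrow> i \<le> j)"

text \<open>Birational rowmotion along a linear extension x1,...,xp:
  tau_{x1} o ... o tau_{xp} (so xp, a top element, is toggled first).\<close>
definition rowmotion_along :: "'a set \<Rightarrow> ('a \<Rightarrow> 'a \<Rightarrow> bool) \<Rightarrow> 'a list \<Rightarrow> ('a \<Rightarrow> real) \<Rightarrow> ('a \<Rightarrow> real)" where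
  "rowmotion_along P le xs = foldr (\<lambda>x g. toggle P le x \<circ> g) xs id"

definition alpha1 :: "('a \<Rightarrow> real) \<Rightarrow> ('a \<Rightarrow> real)" where
  "alpha1 f x = 1 / f x"

definition alpha2 :: "'a set \<Rightarrow> ('a \<Rightarrow> 'a \<Rightarrow> bool) \<Rightarrow> ('a \<Rightarrow> real) \<Rightarrow> ('a \<Rightarrow> real)" where
  "alpha2 P le f x = psum (downc P le x) (\<lambda>y. f x / fhat f y)"

text \<open>alpha3 is defined recursively from the top: the unique function g on P-hat with
  g(top) = 1 and g(x) = f(x) * sum of g over the upper covers of x (x in P);
  values off P \<union> {top} are normalised to 0 to make it unique.\<close>
definition alpha3_hat :: "'a set \<Rightarrow> ('a \<Rightarrow> 'a \<Rightarrow> bool) \<Rightarrow> ('a \<Rightarrow> real) \<Rightarrow> 'a hat \<Rightarrow> real" where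
  "alpha3_hat P le f = (THE g. g Top = 1 \<and> g Bot = 0 \<and>
      (\<forall>x. x \<notin> P \<longrightarrow> g (Elem x) = 0) \<and>
      (\<forall>x\<in>P. g (Elem x) = f x * (\<Sum>y\<in>upc P le x. g y)))"

definition alpha3 :: "'a set \<Rightarrow> ('a \<Rightarrow> 'a \<Rightarrow> bool) \<Rightarrow> ('a \<Rightarrow> real) \<Rightarrow> ('a \<Rightarrow> real)" where
  "alpha3 P le f x = alpha3_hat P le f (Elem x)"

end

theory Submission
  imports Defs
begin

lemma upc_cases:
  assumes "y \<in> upc P le x"
  shows "y = Top \<or> (\<exists>z. y = Elem z \<and> z \<in> P \<and> le x z \<and> z \<noteq> x)"
  using assms by (cases y) (auto simp: upc_def covers_def hless_def hatset_def)

lemma downc_cases: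
  assumes "y \<in> downc P le x"
  shows "y = Bot \<or> (\<exists>z. y = Elem z \<and> z \<in> P \<and> le z x \<and> z \<noteq> x)"
  using assms by (cases y) (auto simp: downc_def covers_def hless_def hatset_def)

lemma fhat_upd: "y \<noteq> Elem x \<Longrightarrow> fhat (F(x:=v)) y = fhat F y"
  by (cases y) auto

lemma psum_cong: "(\<And>y. y \<in> S \<Longrightarrow> g y = h y) \<Longrightarrow> psum S g = psum S h"
  unfolding psum_def by (metis (mono_tags, lifting) sum.cong)

lemma row_aux:
  assumes "distinct ys" "sorted_wrt (\<lambda>a b. \<not> le b a) ys"
    "\<forall>x\<in>set ys. \<forall>y\<in>P. le x y \<and> y \<noteq> x \<longrightarrow> y \<in> set ys"
  shows "(\<forall>z. z \<notin> set ys \<longrightarrow> foldr (\<lambda>x g. toggle P le x \<circ> g) ys id f z = f z) \<and>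
    (\<forall>x\<in>set ys. foldr (\<lambda>x g. toggle P le x \<circ> g) ys id f x =
       (1 / f x) * (\<Sum>y\<in>downc P le x. fhat f y) *
       psum (upc P le x) (fhat (foldr (\<lambda>x g. toggle P le x \<circ> g) ys id f)))"
  using assms
proof (induction ys)
  case Nil
  then show ?case by simp
next
  case (Cons x ys)
  define F where "F = foldr (\<lambda>x g. toggle P le x \<circ> g) ys id f"
  have h3: "\<forall>x\<in>set ys. \<forall>y\<in>P. le x y \<and> y \<noteq> x \<longrightarrow> y \<in> set ys"
  proof (intro ballI impI)
    fix z y assume z: "z \<in> set ys" and y: "y \<in> P" and l: "le z y \<and> y \<noteq> z"
    then have "y \<in> set (x#ys)" using Cons.prems(3) by auto
    moreover have "y \<noteq> x" using Cons.prems(2) z l by auto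
    ultimately show "y \<in> set ys" by simp
  qed
  have IH: "(\<forall>z. z \<notin> set ys \<longrightarrow> F z = f z) \<and>
    (\<forall>x\<in>set ys. F x = (1 / f x) * (\<Sum>y\<in>downc P le x. fhat f y) * psum (upc P le x) (fhat F))"
  proof -
    have d: "distinct ys" using Cons.prems(1) by simp
    have s: "sorted_wrt (\<lambda>a b. \<not> le b a) ys" using Cons.prems(2) by simp
    show ?thesis unfolding F_def by (rule Cons.IH[OF d s h3])
  qed
  define v where "v = (1/F x) * (\<Sum>y\<in>downc P le x. fhat F y) * psum (upc P le x) (fhat F)"
  have Fx: "foldr (\<lambda>x g. toggle P le x \<circ> g) (x#ys) id f = F(x := v)"
    by (simp add: F_def v_def toggle_def)
  have xn: "x \<notin> set ys" using Cons.prems(1) by simp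
  have fx: "F x = f x" using IH xn by auto
  have dn: "(\<Sum>y\<in>downc P le x. fhat F y) = (\<Sum>y\<in>downc P le x. fhat f y)"
  proof (rule sum.cong)
    fix y assume "y \<in> downc P le x"
    from downc_cases[OF this] show "fhat F y = fhat f y"
    proof
      assume "\<exists>z. y = Elem z \<and> z \<in> P \<and> le z x \<and> z \<noteq> x"
      then obtain z where z: "y = Elem z" "le z x" by auto
      have "z \<notin> set ys" using Cons.prems(2) z by auto
      then show ?thesis using IH z by simp
    qed simp
  qed simp
  have up: "psum (upc P le w) (fhat (F(x:=v))) = psum (upc P le w) (fhat F)"
    if "Elem x \<notin> upc P le w" for w
    by (rule psum_cong) (metis fhat_upd that)
  have upx: "Elem x \<notin> upc P le x"
  proof
    assume "Elem x \<in> upc P le x"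
    from upc_cases[OF this] show False by auto
  qed
  have upz: "Elem x \<notin> upc P le z" if "z \<in> set ys" for z
  proof
    assume "Elem x \<in> upc P le z"
    from upc_cases[OF this] have "x \<in> P \<and> le z x \<and> x \<noteq> z" by auto
    then have "x \<in> set ys" using h3 that by blast
    then show False using xn by simp
  qed
  show ?case
  proof (intro conjI allI impI ballI)
    fix z assume "z \<notin> set (x#ys)"
    then show "foldr (\<lambda>x g. toggle P le x \<circ> g) (x#ys) id f z = f z" using Fx IH by auto
  next
    fix z assume z: "z \<in> set (x#ys)"
    show "foldr (\<lambda>x g. toggle P le x \<circ> g) (x#ys) id f z =
       (1 / f z) * (\<Sum>y\<in>downc P le z. fhat f y) *
       psum (upc P le z) (fhat (foldr (\<lambda>x g. toggle P le x \<circ> g) (x#ys) id f))"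
    proof (cases "z = x")
      case True
      then show ?thesis unfolding Fx using up[OF upx] fx dn by (simp add: v_def)
    next
      case False
      then have "z \<in> set ys" using z by simp
      then show ?thesis unfolding Fx using up[OF upz] IH False by auto
    qed
  qed
qed

lemma alpha3_uniq:
  assumes le: "linear_extension P le xs"
    and g1: "\<forall>x\<in>P. g1 (Elem x) = h x * (\<Sum>y\<in>upc P le x. g1 y)" "g1 Top = 1"
    and g2: "\<forall>x\<in>P. g2 (Elem x) = h x * (\<Sum>y\<in>upc P le x. g2 y)" "g2 Top = 1"
  shows "\<forall>x\<in>P. g1 (Elem x) = g2 (Elem x)"
proof -
  have L: "distinct xs" "set xs = P"
    "\<And>i j. i<length xs \<Longrightarrow> j<length xs \<Longrightarrow> le (xs ! i) (xs ! j) \<Longrightarrow> i \<le> j"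
    using le unfolding linear_extension_def by auto
  have main: "i < length xs \<longrightarrow> g1 (Elem (xs!i)) = g2 (Elem (xs!i))" for i
  proof (induction "length xs - i" arbitrary: i rule: less_induct)
    case less
    show ?case
    proof
      assume i: "i < length xs"
      define x where "x = xs ! i"
      have xP: "x \<in> P" using i L(2) x_def by auto
      have "(\<Sum>y\<in>upc P le x. g1 y) = (\<Sum>y\<in>upc P le x. g2 y)"
      proof (rule sum.cong)
        fix y assume "y \<in> upc P le x"
        from upc_cases[OF this] show "g1 y = g2 y"
        proof
          assume "\<exists>z. y = Elem z \<and> z \<in> P \<and> le x z \<and> z \<noteq> x"
          then obtain z where z: "y = Elem z" "z \<in> P" "le x z" "z \<noteq> x" by auto
          then obtain j where j: "j < length xs" "xs ! j = z" using L(2) by (metis in_set_conv_nth)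
          have "i \<le> j" using L(3)[OF i j(1)] z(3) j(2) x_def by simp
          moreover have "i \<noteq> j" using z(4) j(2) x_def by auto
          ultimately have "length xs - j < length xs - i" using j(1) by simp
          then show ?thesis using less j z(1) by auto
        qed (simp add: g1 g2)
      qed simp
      then show "g1 (Elem (xs!i)) = g2 (Elem (xs!i))" using g1 g2 xP x_def by simp
    qed
  qed
  show ?thesis using main L(2) by (metis in_set_conv_nth)
qed

theorem theorem3:
  fixes P :: "'a set" and le :: "'a \<Rightarrow> 'a \<Rightarrow> bool" and f :: "'a \<Rightarrow> real"
    and xs :: "'a list"
  assumes "finite P"
    and "partial_order_on' P le"
    and "\<forall>x\<in>P. f x > 0"
    and "linear_extension P le xs"
  shows "\<forall>x\<in>P. rowmotion_along P le xs f x = alpha1 (alpha3 P le (alpha2 P le f)) x"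
proof
  fix x0 assume x0: "x0 \<in> P"
  define r where "r = rowmotion_along P le xs f"
  have L: "distinct xs" "set xs = P"
    "\<And>i j. i<length xs \<Longrightarrow> j<length xs \<Longrightarrow> le (xs ! i) (xs ! j) \<Longrightarrow> i \<le> j"
    using assms(4) unfolding linear_extension_def by auto
  have srt: "sorted_wrt (\<lambda>a b. \<not> le b a) xs"
    unfolding sorted_wrt_iff_nth_less
  proof (intro allI impI notI)
    fix i j assume "i < j" "j < length xs" "le (xs ! j) (xs ! i)"
    then have "j \<le> i" using L(3)[of j i] by simp
    then show False using \<open>i < j\<close> by simp
  qed
  have R: "\<forall>x\<in>P. r x = (1 / f x) * (\<Sum>y\<in>downc P le x. fhat f y) * psum (upc P le x) (fhat r)"
    using row_aux[OF L(1) srt, of P f] L(2) unfolding r_def rowmotion_along_def by auto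
  define h where "h = alpha2 P le f"
  define G where "G y = (case y of Top \<Rightarrow> 1 | Bot \<Rightarrow> 0 | Elem x \<Rightarrow> if x \<in> P then 1 / r x else 0)" for y
  let ?Q = "\<lambda>g. g Top = 1 \<and> g Bot = 0 \<and>
      (\<forall>x. x \<notin> P \<longrightarrow> g (Elem x) = 0) \<and>
      (\<forall>x\<in>P. g (Elem x) = h x * (\<Sum>y\<in>upc P le x. g y))"
  have QG: "?Q G"
  proof (intro conjI allI impI ballI)
    fix x assume xP: "x \<in> P"
    have s1: "(\<Sum>y\<in>upc P le x. G y) = (\<Sum>y\<in>upc P le x. 1 / fhat r y)"
    proof (rule sum.cong)
      fix y assume "y \<in> upc P le x"
      from upc_cases[OF this] show "G y = 1 / fhat r y" by (auto simp: G_def)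
    qed simp
    have s2: "h x = 1 / ((\<Sum>y\<in>downc P le x. fhat f y) / f x)"
      unfolding h_def alpha2_def psum_def by (simp add: sum_divide_distrib)
    show "G (Elem x) = h x * (\<Sum>y\<in>upc P le x. G y)"
      unfolding s1 s2 using R xP
      by (simp add: G_def psum_def divide_inverse inverse_mult_distrib mult_ac)
  qed (auto simp: G_def)
  have "alpha3_hat P le h = G"
    unfolding alpha3_hat_def
  proof (rule the_equality)
    show "?Q G" by (rule QG)
  next
    fix g assume Qg: "?Q g"
    have e: "\<forall>x\<in>P. g (Elem x) = G (Elem x)"
      by (rule alpha3_uniq[OF assms(4)]) (use Qg QG in auto)
    show "g = G"
    proof
      fix y show "g y = G y"
      proof (cases y)
        case (Elem z) then show ?thesis using Qg QG e by (cases "z \<in> P") auto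
      qed (use Qg QG in auto)
    qed
  qed
  then show "rowmotion_along P le xs f x0 = alpha1 (alpha3 P le (alpha2 P le f)) x0"
    using x0 unfolding alpha1_def alpha3_def h_def[symmetric] r_def[symmetric]
    by (simp add: G_def)
qed

end
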